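(* Let $(K,w_K)$ and $(H,w_H)$ be weighted graphs (1-dimensional weighted simplicial complexes) such that $(H,w_H)$ is a subgraph of $(K,w_K)$ and their proper difference $(L,w_L)$ exists, i.e. $L=K$, $w_L=w_K-w_H$ (with $w_H$ extended by $0$ outside $H$) and $\{F\in K:w_L(F)>0\}$ is a simplicial complex. Assume $w_K$ and $w_L$ satisfy the normalizing condition, and let $\lambda_1\le\dots\le\lambda_N$ and $\theta_1\le\dots\le\theta_N$ ($N$ the number of vertices of $K$) be the eigenvalues of the normalized graph Laplacians $\Delta^{up}_0(K)=\mathcal{L}^{up}_0(K,w_K)$ and $\Delta^{up}_0(L)=\mathcal{L}^{up}_0(L,w_L)$, respectively. With the conventions $\lambda_j=0$ for $1-\dim C^0(H,\mathbb{R})+\dim H^0(H,\mathbb{R})\le j\le 0$ and $\lambda_j=2$ for $N+1\le j\le N+\dim C^0(H,\mathbb{R})$, for all $k=1,\dots,N$: $$\lambda_{k-\dim C^0(H,\mathbb{R})+\dim H^0(H,\mathbb{R})}\le\theta_k\le\lambda_{k+\dim C^0(H,\mathbb{R})}.$$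
   Context: For a graph $G$ (vertices $S_0$, edges $S_1$) with weight function $w\ge0$ on vertices and edges, $C^0(G,\mathbb{R})$ is the space of functions on vertices with inner product $(f,g)=\sum_v w(v)f(v)g(v)$, $C^1$ the space of functions on oriented edges with $(\bar f,\bar g)=\sum_e w(e)\bar f(e)\bar g(e)$, $(\delta_0 f)([u,v])=f(v)-f(u)$, and the formal adjoint $(\delta_0^*\bar f)(v)=\sum_{e\ni v}\frac{w(e)}{w(v)}\mathrm{sgn}(v,\partial e)\bar f(e)$ if $w(v)\neq0$ and $0$ if $w(v)=0$, where $\mathrm{sgn}(v,\partial[u,v])=1$, $\mathrm{sgn}(u,\partial[u,v])=-1$. $\mathcal{L}^{up}_0(G,w)=\delta_0^*\delta_0$. A subgraph $(H,w_H)$ of $(K,w_K)$ is a subcomplex with $w_H\le w_K$ on its faces. The normalizing condition: $w(v)=\sum_{e\ni v}w(e)$ for every vertex $v$ that lies on at least one edge. $\dim C^0(H,\mathbb{R})$ is the number of vertices of $H$ and $\dim H^0(H,\mathbb{R})$ its number of connected components. *)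

theory Defs
  imports "HOL-Analysis.Analysis" "HOL-Computational_Algebra.Polynomial"
begin

definition is_complex1 :: "'a set set \<Rightarrow> bool" where
  "is_complex1 S \<longleftrightarrow> (\<forall>F\<in>S. F \<noteq> {} \<and> finite F \<and> card F \<le> 2) \<and>
     (\<forall>F\<in>S. \<forall>G. G \<subseteq> F \<and> G \<noteq> {} \<longrightarrow> G \<in> S)"

definition vertices :: "'a set set \<Rightarrow> 'a set" where
  "vertices S = {v. {v} \<in> S}"

definition edges_at :: "'a set set \<Rightarrow> 'a \<Rightarrow> 'a set set" where
  "edges_at S v = {e \<in> S. card e = 2 \<and> v \<in> e}"

definition weighted_subgraph ::
  "'a set set \<Rightarrow> ('a set \<Rightarrow> real) \<Rightarrow> 'a set set \<Rightarrow> ('a set \<Rightarrow> real) \<Rightarrow> bool" where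
  "weighted_subgraph H wH K wK \<longleftrightarrow> is_complex1 H \<and> is_complex1 K \<and> H \<subseteq> K \<and>
     (\<forall>F\<in>H. wH F \<le> wK F)"

definition diff_weight :: "('a set \<Rightarrow> real) \<Rightarrow> 'a set set \<Rightarrow> ('a set \<Rightarrow> real) \<Rightarrow> 'a set \<Rightarrow> real" where
  "diff_weight wK H wH F = wK F - (if F \<in> H then wH F else 0)"

definition normalizing :: "'a set set \<Rightarrow> ('a set \<Rightarrow> real) \<Rightarrow> bool" where
  "normalizing S w \<longleftrightarrow> (\<forall>v \<in> vertices S. edges_at S v \<noteq> {} \<longrightarrow>
      w {v} = (\<Sum>e\<in>edges_at S v. w e))"

text \<open>The up Laplacian \<delta>0* \<delta>0 on vertex functions. For an edge e containing v, with
  other endpoint u, sgn(v,\<partial>e) \<cdot> (\<delta>0 f)(e) = f v - f u, independent of the orientation.\<close>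
definition lap_up0 :: "'a set set \<Rightarrow> ('a set \<Rightarrow> real) \<Rightarrow> ('a \<Rightarrow> real) \<Rightarrow> 'a \<Rightarrow> real" where
  "lap_up0 S w f v = (if w {v} = 0 then 0 else
     (\<Sum>e\<in>edges_at S v. w e / w {v} * (f v - f (the_elem (e - {v})))))"

definition lap_matrix :: "'n::finite set set \<Rightarrow> ('n set \<Rightarrow> real) \<Rightarrow> real^'n^'n" where
  "lap_matrix S w = (\<chi> v u. lap_up0 S w (\<lambda>x. if x = u then 1 else 0) v)"

definition charpoly :: "real^'n::finite^'n \<Rightarrow> real poly" where
  "charpoly A = det (\<chi> i j. (if i = j then [:0, 1:] else 0) - [:A $ i $ j:])"

definition sorted_eigenvalues :: "real^'n::finite^'n \<Rightarrow> real list \<Rightarrow> bool" where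
  "sorted_eigenvalues A ls \<longleftrightarrow> length ls = CARD('n) \<and> sorted ls \<and>
     charpoly A = (\<Prod>x\<leftarrow>ls. [:- x, 1:])"

definition eig_ext :: "real list \<Rightarrow> int \<Rightarrow> real" where
  "eig_ext ls j = (if j \<le> 0 then 0 else if nat j > length ls then 2 else ls ! (nat j - 1))"

text \<open>Number of connected components of the graph underlying a complex (= dim H^0).\<close>
definition num_components :: "'a set set \<Rightarrow> nat" where
  "num_components S = card (vertices S //
     {(u, v). u \<in> vertices S \<and> v \<in> vertices S \<and>
        (u, v) \<in> {(x, y). {x, y} \<in> S \<and> x \<noteq> y}\<^sup>*})"

end

theory Submission
  imports Defs
begin

lemma symm_inner:
  fixes S :: "real^'n^'n"
  assumes "transpose S = S"
  shows "(S *v x) \<bullet> y = x \<bullet> (S *v y)"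
proof -
  have "x \<bullet> (S *v y) = (x v* S) \<bullet> y" by (simp add: dot_lmul_matrix)
  also have "x v* S = S *v x" by (metis assms vector_transpose_matrix)
  finally show ?thesis by simp
qed

lemma quad_zero_bilinear:
  fixes r b :: real
  assumes "\<And>t. 2*t*b + t^2 * r \<ge> 0" "r \<ge> 0"
  shows "b = 0"
proof -
  define c where "c = r + 1"
  have c: "c > 0" using assms(2) c_def by simp
  have "2*(-b/c)*b + (-b/c)^2 * r \<ge> 0" using assms(1) .
  moreover have "2*(-b/c)*b + (-b/c)^2 * r = -(b^2 * (r+2)) / c^2"
  proof -
    have r: "r = c - 1" using c_def by simp
    show ?thesis using c unfolding r by (simp add: field_simps power2_eq_square)
  qed
  ultimately have "-(b^2 * (r+2)) / c^2 \<ge> 0" by simp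
  hence "-(b^2 * (r+2)) \<ge> 0" using c by (simp add: divide_le_0_iff)
  moreover have "b^2 * (r+2) \<ge> 0" using assms(2) by simp
  ultimately have "b^2 * (r+2) = 0" by linarith
  then show ?thesis using assms(2) by simp
qed

lemma max_eigen:
  fixes S :: "real^'n^'n"
  assumes sym: "transpose S = S" and W: "subspace W" and inv: "\<forall>x\<in>W. S *v x \<in> W"
    and ne: "W \<noteq> {0}"
  shows "\<exists>x\<in>W. norm x = 1 \<and> S *v x = (x \<bullet> (S *v x)) *\<^sub>R x"
proof -
  let ?q = "\<lambda>x. x \<bullet> (S *v x)"
  have cpt: "compact (W \<inter> sphere 0 1)"
    using compact_Int_closed[OF compact_sphere closed_subspace[OF W]] by (simp add: Int_commute)
  obtain y where y: "y \<in> W" "y \<noteq> 0" using ne W subspace_0 by blast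
  have "y /\<^sub>R norm y \<in> W \<inter> sphere 0 1" using y W by (simp add: subspace_scale)
  hence nem: "W \<inter> sphere 0 1 \<noteq> {}" by blast
  have cont: "continuous_on (W \<inter> sphere 0 1) ?q"
    by (intro continuous_intros linear_continuous_on matrix_vector_mul_linear)
  obtain x where x: "x \<in> W \<inter> sphere 0 1" and xmax: "\<forall>z\<in>W \<inter> sphere 0 1. ?q z \<le> ?q x"
    using continuous_attains_sup[OF cpt nem cont] by blast
  define \<mu> where "\<mu> = ?q x"
  have nx: "norm x = 1" using x by simp
  have xx: "x \<bullet> x = 1" using nx by (simp add: dot_square_norm)
  have Rnn: "\<mu> * (z \<bullet> z) - ?q z \<ge> 0" if "z \<in> W" for z
  proof (cases "z = 0")
    case True then show ?thesis by simp
  next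
    case False
    let ?u = "z /\<^sub>R norm z"
    have "?u \<in> W \<inter> sphere 0 1" using that False W by (simp add: subspace_scale)
    hence "?q ?u \<le> \<mu>" using xmax \<mu>_def by blast
    moreover have "?q ?u = ?q z / (norm z)^2"
      by (simp add: matrix_vector_mult_scaleR power2_eq_square divide_inverse inverse_mult_distrib)
    moreover have "z \<bullet> z = (norm z)^2" by (simp add: dot_square_norm)
    ultimately show ?thesis using False by (simp add: divide_le_eq)
  qed
  have Bz: "(\<mu> *\<^sub>R x - S *v x) \<bullet> z = 0" if "z \<in> W" for z
  proof (rule quad_zero_bilinear)
    show "\<mu> * (z \<bullet> z) - ?q z \<ge> 0" using Rnn that .
    fix t
    have "x + t *\<^sub>R z \<in> W" using x that W
      by (metis IntD1 subspace_add subspace_scale)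
    hence "\<mu> * ((x + t *\<^sub>R z) \<bullet> (x + t *\<^sub>R z)) - ?q (x + t *\<^sub>R z) \<ge> 0" using Rnn by blast
    moreover have "\<mu> * ((x + t *\<^sub>R z) \<bullet> (x + t *\<^sub>R z)) - ?q (x + t *\<^sub>R z)
        = (\<mu> * (x \<bullet> x) - ?q x) + 2*t*((\<mu> *\<^sub>R x - S *v x) \<bullet> z) + t^2 * (\<mu> * (z \<bullet> z) - ?q z)"
      using symm_inner[OF sym, of z x]
      by (simp add: matrix_vector_right_distrib matrix_vector_mult_scaleR inner_add_left inner_add_right
          algebra_simps power2_eq_square inner_commute)
    moreover have "\<mu> * (x \<bullet> x) - ?q x = 0" using xx \<mu>_def by simp
    ultimately show "2*t*((\<mu> *\<^sub>R x - S *v x) \<bullet> z) + t^2 * (\<mu> * (z \<bullet> z) - ?q z) \<ge> 0" by simp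
  qed
  have "\<mu> *\<^sub>R x - S *v x \<in> W" using x inv W
    by (metis IntD1 subspace_diff subspace_scale)
  hence "(\<mu> *\<^sub>R x - S *v x) \<bullet> (\<mu> *\<^sub>R x - S *v x) = 0" using Bz by blast
  hence "S *v x = \<mu> *\<^sub>R x" by simp
  then show ?thesis using x nx \<mu>_def by blast
qed

lemma spectral_sub:
  fixes S :: "real^'n^'n"
  assumes sym: "transpose S = S"
  shows "subspace W \<Longrightarrow> (\<forall>x\<in>W. S *v x \<in> W) \<Longrightarrow> dim W = n \<Longrightarrow>
    \<exists>B\<subseteq>W. finite B \<and> card B = n \<and> pairwise orthogonal B \<and>
      (\<forall>b\<in>B. norm b = 1 \<and> S *v b = (b \<bullet> (S *v b)) *\<^sub>R b)"
proof (induction n arbitrary: W)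
  case 0
  then show ?case by (intro exI[of _ "{}"]) auto
next
  case (Suc n)
  have ne: "W \<noteq> {0}" using Suc.prems(3) by auto
  obtain x where x: "x \<in> W" "norm x = 1" "S *v x = (x \<bullet> (S *v x)) *\<^sub>R x"
    using max_eigen[OF sym Suc.prems(1,2) ne] by blast
  have xx: "x \<bullet> x = 1" using x(2) by (simp add: dot_square_norm)
  define W' where "W' = {y\<in>W. x \<bullet> y = 0}"
  have sW': "subspace W'" using Suc.prems(1) unfolding W'_def subspace_def
    by (auto simp: inner_add_right)
  have iW': "\<forall>y\<in>W'. S *v y \<in> W'"
  proof
    fix y assume y: "y \<in> W'"
    have "x \<bullet> (S *v y) = (S *v x) \<bullet> y" using symm_inner[OF sym] by simp
    also have "\<dots> = 0"
    proof -
      obtain m where "S *v x = m *\<^sub>R x" using x(3) by blast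
      then show ?thesis using y unfolding W'_def by (simp add: inner_scaleR_left)
    qed
    finally show "S *v y \<in> W'" using y Suc.prems(2) unfolding W'_def by auto
  qed
  have sum_eq: "{a + b |a b. a \<in> W' \<and> b \<in> span {x}} = W"
  proof (intro equalityI subsetI)
    fix z assume "z \<in> {a + b |a b. a \<in> W' \<and> b \<in> span {x}}"
    then obtain a b where "z = a + b" "a \<in> W'" "b \<in> span {x}" by blast
    moreover have "span {x} \<subseteq> W" using x(1) Suc.prems(1) by (simp add: span_minimal)
    ultimately show "z \<in> W" using Suc.prems(1) unfolding W'_def by (auto intro: subspace_add)
  next
    fix z assume z: "z \<in> W"
    have "z - (x \<bullet> z) *\<^sub>R x \<in> W'" unfolding W'_def
      using z x(1) Suc.prems(1) xx by (auto simp: subspace_diff subspace_scale inner_diff_right)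
    moreover have "(x \<bullet> z) *\<^sub>R x \<in> span {x}" by (simp add: span_base span_scale)
    ultimately show "z \<in> {a + b |a b. a \<in> W' \<and> b \<in> span {x}}"
      by (intro CollectI exI[of _ "z - (x \<bullet> z) *\<^sub>R x"] exI[of _ "(x \<bullet> z) *\<^sub>R x"]) auto
  qed
  have int0: "W' \<inter> span {x} \<subseteq> {0}"
  proof
    fix z assume z: "z \<in> W' \<inter> span {x}"
    then obtain c where c: "z = c *\<^sub>R x" by (auto simp: span_singleton)
    then have "c = 0" using z xx unfolding W'_def by (simp add: inner_scaleR_right)
    then show "z \<in> {0}" using c by simp
  qed
  have "dim W + dim (W' \<inter> span {x}) = dim W' + dim (span {x})"
    using dim_sums_Int[OF sW' subspace_span[of "{x}"]] sum_eq by simp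
  moreover have "dim (W' \<inter> span {x}) = 0" using int0 by simp
  moreover have "dim (span {x}) = 1" using x(2) by auto
  ultimately have dW': "dim W' = n" using Suc.prems(3) by simp
  obtain B' where B': "B' \<subseteq> W'" "finite B'" "card B' = n" "pairwise orthogonal B'"
      "\<forall>b\<in>B'. norm b = 1 \<and> S *v b = (b \<bullet> (S *v b)) *\<^sub>R b"
    using Suc.IH[OF sW' iW' dW'] by blast
  have xnot: "x \<notin> B'" using B'(1) xx unfolding W'_def by auto
  have orth: "\<forall>b\<in>B'. orthogonal x b \<and> orthogonal b x"
    using B'(1) unfolding W'_def orthogonal_def by (auto simp: inner_commute)
  show ?case
    apply (intro exI[of _ "insert x B'"])
    using B' x xnot orth W'_def by (auto simp: pairwise_insert)
qed

lemma spectral: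
  fixes S :: "real^'n^'n"
  assumes sym: "transpose S = S"
  obtains b :: "'n \<Rightarrow> real^'n" where
    "\<And>i j. b i \<bullet> b j = (if i = j then 1 else 0)"
    "\<And>i. S *v b i = (b i \<bullet> (S *v b i)) *\<^sub>R b i"
    "\<And>x. x = (\<Sum>i\<in>UNIV. (x \<bullet> b i) *\<^sub>R b i)"
proof -
  obtain B where B: "finite B" "card B = CARD('n)" "pairwise orthogonal B"
      "\<forall>b\<in>B. norm b = 1 \<and> S *v b = (b \<bullet> (S *v b)) *\<^sub>R b"
    using spectral_sub[OF sym, of UNIV "CARD('n)"] by auto
  obtain f where f: "bij_betw f (UNIV::'n set) B"
    using finite_same_card_bij[of "UNIV::'n set" B] B(1,2) by auto
  have inj: "inj f" and im: "f ` UNIV = B" using f by (auto simp: bij_betw_def)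
  have on: "f i \<bullet> f j = (if i = j then 1 else 0)" for i j
  proof (cases "i = j")
    case True
    have "norm (f i) = 1" using B(4) im by auto
    then show ?thesis using True by (simp add: dot_square_norm)
  next
    case False
    then have "f i \<noteq> f j" using inj by (meson injD)
    then show ?thesis using B(3) im False unfolding pairwise_def orthogonal_def by auto
  qed
  have ind: "independent B"
    using B(3,4) by (intro pairwise_orthogonal_independent) auto
  have spB: "span B = UNIV"
  proof -
    have "dim B = CARD('n)" using ind B(2) by (simp add: dim_eq_card_independent)
    thus ?thesis using dim_eq_full[of B] by simp
  qed
  have exp: "x = (\<Sum>i\<in>UNIV. (x \<bullet> f i) *\<^sub>R f i)" for x
  proof -
    define v where "v = x - (\<Sum>i\<in>UNIV. (x \<bullet> f i) *\<^sub>R f i)"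
    have ov: "orthogonal v y" if yB: "y \<in> B" for y
    proof -
      obtain j where j: "y = f j" using yB im by auto
      have "v \<bullet> f j = x \<bullet> f j - (\<Sum>i\<in>UNIV. (x \<bullet> f i) * (f i \<bullet> f j))"
        unfolding v_def by (simp add: inner_diff_left inner_sum_left)
      also have "(\<Sum>i\<in>UNIV. (x \<bullet> f i) * (f i \<bullet> f j)) = x \<bullet> f j"
        by (simp add: on if_distrib cong: if_cong)
      finally show ?thesis using j by (simp add: orthogonal_def)
    qed
    have "orthogonal v v" using orthogonal_to_span[of v B v] ov spB by auto
    then have "v = 0" by (simp add: orthogonal_def)
    then show ?thesis unfolding v_def by simp
  qed
  show ?thesis
    apply (rule that[of f])
    using on apply simp
    using B(4) im apply auto[1]
    using exp by simp
qed

lemma mset_lin_unique: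
  fixes A B :: "real multiset"
  shows "prod_mset (image_mset (\<lambda>x. [:-x, 1:]) A) = prod_mset (image_mset (\<lambda>x. [:-x, 1:]) B) \<Longrightarrow> A = B"
proof (induction A arbitrary: B)
  case empty
  show ?case
  proof (rule ccontr)
    assume "{#} \<noteq> B"
    then obtain b where b: "b \<in># B" by (metis multiset_nonemptyE)
    have "poly (prod_mset (image_mset (\<lambda>x. [:-x, 1:]) B)) b = 0"
      using b by (auto simp: poly_prod_mset prod_mset_zero_iff)
    then show False using empty by simp
  qed
next
  case (add x A)
  have "poly (prod_mset (image_mset (\<lambda>x. [:-x, 1:]) (add_mset x A))) x = 0" by simp
  hence "poly (prod_mset (image_mset (\<lambda>x. [:-x, 1:]) B)) x = 0" unfolding add.prems .
  hence xB: "x \<in># B" by (auto simp: poly_prod_mset prod_mset_zero_iff)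
  define B' where "B' = B - {#x#}"
  have B: "B = add_mset x B'" using xB B'_def by simp
  have "[:-x, 1:] * prod_mset (image_mset (\<lambda>x. [:-x, 1:]) A) = [:-x, 1:] * prod_mset (image_mset (\<lambda>x. [:-x, 1:]) B')"
    using add.prems unfolding B by simp
  hence "prod_mset (image_mset (\<lambda>x. [:-x, 1:]) A) = prod_mset (image_mset (\<lambda>x. [:-x, 1:]) B')"
    by (simp del: mult_pCons_left)
  hence "A = B'" using add.IH by blast
  then show ?case using B by simp
qed

lemma poly_det:
  fixes P :: "real poly^'n^'n"
  shows "poly (det P) y = det (\<chi> i j. poly (P$i$j) y)"
  by (simp add: det_def poly_sum poly_prod)

lemma poly_charpoly:
  "poly (charpoly A) y = det (\<chi> i j. (if i = j then y else 0) - A$i$j)"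
  unfolding charpoly_def poly_det by (intro arg_cong[where f=det]) (auto simp: vec_eq_iff)

lemma det_scale:
  fixes M :: "real^'n^'n"
  shows "det (\<chi> i j. c i * M$i$j * d j) = (\<Prod>i\<in>UNIV. c i) * (\<Prod>i\<in>UNIV. d i) * det M"
proof -
  have 1: "(\<chi> i j. c i * M$i$j * d j) = (\<chi> i. c i *s (\<chi> j. M$i$j * d j))"
    by (simp add: vec_eq_iff mult.assoc)
  have 2: "det (\<chi> i j. M$i$j * d j) = det (\<chi> j. d j *s (\<chi> i. M$i$j))"
    by (subst det_transpose[symmetric]) (simp add: transpose_def vec_eq_iff mult.commute)
  have 3: "det (\<chi> j i. M$i$j) = det M"
    by (subst det_transpose[symmetric]) (simp add: transpose_def)
  show ?thesis unfolding 1 det_rows_mul 2 using 3 by simp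
qed

lemma size_filter_image_mset:
  "size (filter_mset P (image_mset f M)) = size (filter_mset (\<lambda>i. P (f i)) M)"
  by (induction M) auto

locale symeig =
  fixes S :: "real^'n^'n" and b :: "'n \<Rightarrow> real^'n" and \<mu> :: "'n \<Rightarrow> real"
  assumes on: "\<And>i j. b i \<bullet> b j = (if i = j then 1 else 0)"
    and ev: "\<And>i. S *v b i = \<mu> i *\<^sub>R b i"
    and exp: "\<And>x. x = (\<Sum>i\<in>UNIV. (x \<bullet> b i) *\<^sub>R b i)"
begin

lemma qf: "x \<bullet> (S *v x) = (\<Sum>i\<in>UNIV. \<mu> i * (x \<bullet> b i)^2)"
proof -
  have "S *v x = (\<Sum>i\<in>UNIV. ((x \<bullet> b i) * \<mu> i) *\<^sub>R b i)"
    by (subst exp) (simp add: vec.sum matrix_vector_mult_scaleR ev)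
  then show ?thesis by (simp add: inner_sum_right power2_eq_square mult_ac)
qed

lemma nrm: "x \<bullet> x = (\<Sum>i\<in>UNIV. (x \<bullet> b i)^2)"
proof -
  have "x \<bullet> x = x \<bullet> (\<Sum>i\<in>UNIV. (x \<bullet> b i) *\<^sub>R b i)" by (subst (2) exp) simp
  then show ?thesis by (simp add: inner_sum_right power2_eq_square)
qed

lemma inj_b: "inj b"
  by (metis injI on zero_neq_one)

lemma indep_b: "independent (b ` J)"
proof (rule pairwise_orthogonal_independent)
  show "pairwise orthogonal (b ` J)" unfolding pairwise_def orthogonal_def using on by auto
  show "0 \<notin> b ` J" using on by (metis imageE inner_zero_left zero_neq_one)
qed

lemma dim_span_b: "dim (span (b ` J)) = card J"
  using dim_span_eq_card_independent[OF indep_b] inj_b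
  by (simp add: card_image inj_on_subset)

lemma span_b_coord: assumes "x \<in> span (b ` J)" "i \<notin> J" shows "x \<bullet> b i = 0"
proof -
  have "orthogonal (b i) x"
    using orthogonal_to_span[OF assms(1), of "b i"] on assms(2) unfolding orthogonal_def
    by (metis imageE)
  then show ?thesis by (simp add: orthogonal_def inner_commute)
qed

lemma charpoly_det: "det (\<chi> i j. (if i = j then y else 0) - S$i$j) = (\<Prod>i\<in>UNIV. y - \<mu> i)"
proof -
  define Q :: "real^'n^'n" where "Q = (\<chi> i j. b j $ i)"
  define M :: "real^'n^'n" where "M = (\<chi> i j. (if i = j then y else 0) - S$i$j)"
  have Mv: "M *v v = y *\<^sub>R v - S *v v" for v
  proof -
    have e: "((if i = j then y else 0) - S$i$j) * v$j = (if i = j then y * v$j else 0) - S$i$j * v$j" for i j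
      by (simp add: left_diff_distrib)
    show ?thesis
      by (simp add: M_def vec_eq_iff matrix_vector_mult_def e sum_subtractf)
  qed
  have NQ: "(N ** Q) $ k $ j = (N *v b j) $ k" for N k j
    by (simp add: Q_def matrix_matrix_mult_def matrix_vector_mult_def)
  have TP: "(transpose Q ** P) $ i $ j = (\<Sum>k\<in>UNIV. b i $ k * P $ k $ j)" for P i j
    by (simp add: Q_def matrix_matrix_mult_def transpose_def)
  have ent: "(transpose Q ** N ** Q) $ i $ j = b i \<bullet> (N *v b j)" for N i j
    unfolding matrix_mul_assoc[symmetric] TP NQ by (simp add: inner_vec_def)
  have QQ: "(transpose Q ** Q) $ i $ j = b i \<bullet> b j" for i j
    using ent[of "mat 1" i j] by simp
  have "transpose Q ** Q = mat 1"
    by (simp add: vec_eq_iff QQ on mat_def)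
  hence "det (transpose Q) * det Q = 1"
    by (metis det_I det_mul)
  hence dQ: "det Q * det Q = 1" by simp
  have "transpose Q ** M ** Q = (\<chi> i j. if i = j then y - \<mu> j else 0)"
    by (simp add: vec_eq_iff ent Mv ev inner_diff_right on)
  hence "det (transpose Q ** M ** Q) = (\<Prod>i\<in>UNIV. y - \<mu> i)"
    by (simp add: det_diagonal)
  moreover have "det (transpose Q ** M ** Q) = det M * (det Q * det Q)"
    by (simp add: det_mul)
  ultimately show ?thesis using dQ M_def by simp
qed

end

lemma prod_list_map_mset: "prod_list (map f xs) = prod_mset (image_mset f (mset xs))"
  by (induction xs) auto

lemma sorted_count_ge:
  fixes ls :: "real list"
  assumes "sorted ls" "1 \<le> m" "m \<le> length ls"
  shows "length ls - m + 1 \<le> length (filter (\<lambda>x. ls!(m-1) \<le> x) ls)"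
proof -
  have "{m-1..<length ls} \<subseteq> {i. i < length ls \<and> ls!(m-1) \<le> ls!i}"
    using assms sorted_nth_mono[OF assms(1)] by fastforce
  hence "card {m-1..<length ls} \<le> card {i. i < length ls \<and> ls!(m-1) \<le> ls!i}"
    by (intro card_mono) auto
  then show ?thesis using assms by (simp add: length_filter_conv_card)
qed

lemma sorted_count_le:
  fixes ls :: "real list"
  assumes "sorted ls" "1 \<le> m" "m \<le> length ls"
  shows "m \<le> length (filter (\<lambda>x. x \<le> ls!(m-1)) ls)"
proof -
  have "{0..<m} \<subseteq> {i. i < length ls \<and> ls!i \<le> ls!(m-1)}"
    using assms sorted_nth_mono[OF assms(1)] by fastforce
  hence "card {0..<m} \<le> card {i. i < length ls \<and> ls!i \<le> ls!(m-1)}"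
    by (intro card_mono) auto
  then show ?thesis using assms by (simp add: length_filter_conv_card)
qed

lemma gen_eig:
  fixes S L :: "real^'n^'n" and e :: "'n \<Rightarrow> real"
  assumes sym: "transpose S = S" and epos: "\<forall>i. e i > 0"
    and rel: "\<forall>i j. L$i$j * e i = S$i$j * e j" and eig: "sorted_eigenvalues L ls"
  shows "\<forall>t\<in>set ls. \<exists>x. x \<bullet> x = 1 \<and> t = x \<bullet> (S *v x)"
    and "\<And>W m t. subspace W \<Longrightarrow> 1 \<le> m \<Longrightarrow> m \<le> dim W \<Longrightarrow> (\<forall>x\<in>W. x \<bullet> (S *v x) \<le> t * (x \<bullet> x))
           \<Longrightarrow> ls!(m-1) \<le> t"
    and "\<And>m. 1 \<le> m \<Longrightarrow> m \<le> CARD('n) \<Longrightarrow>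
           \<exists>W. subspace W \<and> m \<le> dim W \<and> (\<forall>x\<in>W. x \<bullet> (S *v x) \<le> ls!(m-1) * (x \<bullet> x))"
proof -
  have "\<exists>b. symeig S b (\<lambda>i. b i \<bullet> (S *v b i))"
    by (rule spectral[OF sym], rule exI, unfold symeig_def, intro conjI allI, assumption+)
  then obtain b where "symeig S b (\<lambda>i. b i \<bullet> (S *v b i))" by blast
  then interpret symeig S b "\<lambda>i. b i \<bullet> (S *v b i)" .
  define \<mu> where "\<mu> i = b i \<bullet> (S *v b i)" for i
  have \<mu>_eq: "(\<lambda>i. b i \<bullet> (S *v b i)) = \<mu>" using \<mu>_def by auto
  have len: "length ls = CARD('n)" and srt: "sorted ls"
    and cp: "charpoly L = (\<Prod>x\<leftarrow>ls. [:- x, 1:])"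
    using eig unfolding sorted_eigenvalues_def by auto
  have "poly (charpoly L) y = poly (\<Prod>i\<in>UNIV. [:- \<mu> i, 1:]) y" for y
  proof -
    have "(\<chi> i j. (if i = j then y else 0) - L$i$j) =
        (\<chi> i j. (1 / e i) * ((\<chi> i j. (if i = j then y else 0) - S$i$j) $ i $ j) * e j)"
    proof -
      have "(if i = j then y else 0) - L$i$j = (1 / e i) * ((if i = j then y else 0) - S$i$j) * e j" for i j
      proof -
        have "L$i$j = S$i$j * e j / e i" using rel epos
          by (metis less_irrefl nonzero_eq_divide_eq)
        moreover have "e i > 0" "e j > 0" using epos by auto
        ultimately show ?thesis by (auto simp: field_simps)
      qed
      then show ?thesis by (simp add: vec_eq_iff)
    qed
    hence "det (\<chi> i j. (if i = j then y else 0) - L$i$j) =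
        (\<Prod>i\<in>UNIV. 1 / e i) * (\<Prod>i\<in>UNIV. e i) * det (\<chi> i j. (if i = j then y else 0) - S$i$j)"
      by (simp only: det_scale)
    also have "(\<Prod>i\<in>UNIV. 1 / e i) * (\<Prod>i\<in>UNIV. e i) = 1"
    proof -
      have "\<And>i. 1 / e i * e i = 1" using epos by (metis less_irrefl divide_self_if times_divide_eq_left mult_1)
      then show ?thesis by (simp add: prod.distrib[symmetric])
    qed
    finally show ?thesis by (simp add: poly_charpoly charpoly_det poly_prod \<mu>_def)
  qed
  hence "charpoly L = (\<Prod>i\<in>UNIV. [:- \<mu> i, 1:])" by (simp add: poly_eq_poly_eq_iff[symmetric] fun_eq_iff)
  hence "prod_mset (image_mset (\<lambda>x. [:-x, 1:]) (mset ls)) =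
      prod_mset (image_mset (\<lambda>x. [:-x, 1:]) (image_mset \<mu> (mset_set UNIV)))"
    using cp by (simp add: prod_list_map_mset prod_unfold_prod_mset image_mset.compositionality o_def)
  hence ms: "mset ls = image_mset \<mu> (mset_set UNIV)" by (rule mset_lin_unique)
  have cnt: "card {i. P (\<mu> i)} = length (filter P ls)" for P
  proof -
    have "length (filter P ls) = size (filter_mset P (mset ls))"
      by (metis mset_filter size_mset)
    also have "\<dots> = size (filter_mset (\<lambda>i. P (\<mu> i)) (mset_set UNIV))"
      unfolding ms by (rule size_filter_image_mset)
    also have "\<dots> = card {i. P (\<mu> i)}" by (simp add: filter_mset_mset_set)
    finally show ?thesis by simp
  qed
  show "\<forall>t\<in>set ls. \<exists>x. x \<bullet> x = 1 \<and> t = x \<bullet> (S *v x)"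
  proof
    fix t assume "t \<in> set ls"
    hence "t \<in># image_mset \<mu> (mset_set UNIV)" by (metis ms set_mset_mset)
    then obtain i where "t = \<mu> i" by auto
    then show "\<exists>x. x \<bullet> x = 1 \<and> t = x \<bullet> (S *v x)" using on \<mu>_def by (intro exI[of _ "b i"]) auto
  qed
  show "ls!(m-1) \<le> t" if W: "subspace W" and m1: "1 \<le> m" and mW: "m \<le> dim W"
      and Wt: "\<forall>x\<in>W. x \<bullet> (S *v x) \<le> t * (x \<bullet> x)" for W m t
  proof -
    define t0 where "t0 = ls!(m-1)"
    define J where "J = {i. t0 \<le> \<mu> i}"
    have dWn: "dim W \<le> CARD('n)" using dim_subset_UNIV[of W] by simp
    have cJ: "CARD('n) - m + 1 \<le> card J"
      using sorted_count_ge[OF srt m1] mW dWn len cnt[of "\<lambda>x. t0 \<le> x"] unfolding J_def t0_def by simp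
    define E where "E = span (b ` J)"
    have dE: "dim E = card J" unfolding E_def by (rule dim_span_b)
    have "dim {x + y |x y. x \<in> W \<and> y \<in> E} + dim (W \<inter> E) = dim W + dim E"
      using dim_sums_Int[OF W subspace_span[of "b ` J"]] unfolding E_def by simp
    moreover have "dim {x + y |x y. x \<in> W \<and> y \<in> E} \<le> CARD('n)"
      using dim_subset_UNIV[of "{x + y |x y. x \<in> W \<and> y \<in> E}"] by simp
    ultimately have "dim (W \<inter> E) \<noteq> 0" using cJ dE mW dWn m1 by linarith
    then obtain x where x: "x \<in> W" "x \<in> E" "x \<noteq> 0" by (auto simp: dim_eq_0 subset_eq)
    have c0: "x \<bullet> b i = 0" if "i \<notin> J" for i using span_b_coord x(2) that unfolding E_def by blast
    have "t0 * (x \<bullet> x) = (\<Sum>i\<in>UNIV. t0 * (x \<bullet> b i)^2)" by (simp add: nrm sum_distrib_left)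
    also have "\<dots> \<le> (\<Sum>i\<in>UNIV. \<mu> i * (x \<bullet> b i)^2)"
    proof (rule sum_mono)
      fix i show "t0 * (x \<bullet> b i)^2 \<le> \<mu> i * (x \<bullet> b i)^2"
        using c0[of i] unfolding J_def by (cases "i \<in> J") (auto simp: J_def intro: mult_right_mono)
    qed
    also have "\<dots> = x \<bullet> (S *v x)" by (subst qf) (simp add: \<mu>_def)
    also have "\<dots> \<le> t * (x \<bullet> x)" using Wt x by blast
    finally have "t0 * (x \<bullet> x) \<le> t * (x \<bullet> x)" .
    moreover have "x \<bullet> x > 0" using x by simp
    ultimately show ?thesis unfolding t0_def by simp
  qed
  show "\<exists>W. subspace W \<and> m \<le> dim W \<and> (\<forall>x\<in>W. x \<bullet> (S *v x) \<le> ls!(m-1) * (x \<bullet> x))"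
    if m1: "1 \<le> m" and mn: "m \<le> CARD('n)" for m
  proof -
    define t0 where "t0 = ls!(m-1)"
    define J where "J = {i. \<mu> i \<le> t0}"
    have cJ: "m \<le> card J"
      using sorted_count_le[OF srt m1] mn len cnt[of "\<lambda>x. x \<le> t0"] unfolding J_def t0_def by simp
    define E where "E = span (b ` J)"
    have dE: "dim E = card J" unfolding E_def by (rule dim_span_b)
    have "\<forall>x\<in>E. x \<bullet> (S *v x) \<le> t0 * (x \<bullet> x)"
    proof
      fix x assume x: "x \<in> E"
      have c0: "x \<bullet> b i = 0" if "i \<notin> J" for i using span_b_coord x that unfolding E_def by blast
      have "x \<bullet> (S *v x) = (\<Sum>i\<in>UNIV. \<mu> i * (x \<bullet> b i)^2)" by (subst qf) (simp add: \<mu>_def)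
      also have "\<dots> \<le> (\<Sum>i\<in>UNIV. t0 * (x \<bullet> b i)^2)"
      proof (rule sum_mono)
        fix i show "\<mu> i * (x \<bullet> b i)^2 \<le> t0 * (x \<bullet> b i)^2"
          using c0[of i] unfolding J_def by (cases "i \<in> J") (auto simp: J_def intro: mult_right_mono)
      qed
      also have "\<dots> = t0 * (x \<bullet> x)" by (simp add: nrm sum_distrib_left)
      finally show "x \<bullet> (S *v x) \<le> t0 * (x \<bullet> x)" .
    qed
    moreover have "subspace E" unfolding E_def by simp
    ultimately show ?thesis using cJ dE unfolding t0_def by (intro exI[of _ E]) auto
  qed
qed

definition oth :: "'a set \<Rightarrow> 'a \<Rightarrow> 'a" where "oth e v = the_elem (e - {v})"

lemma edge_oth:
  assumes "card e = 2" "v \<in> e"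
  shows "e = {v, oth e v}" "oth e v \<noteq> v" "oth e v \<in> e" "oth e (oth e v) = v"
proof -
  have "card (e - {v}) = 1" using assms by (simp add: card_Diff_singleton)
  then obtain u where u: "e - {v} = {u}" using card_1_singleton_iff[of "e - {v}"] by auto
  then have o: "oth e v = u" by (simp add: oth_def)
  have uv: "u \<noteq> v" using u by blast
  have e: "e = {v, u}" using u assms(2) by blast
  show "e = {v, oth e v}" using e o by simp
  show "oth e v \<noteq> v" using o uv by simp
  show "oth e v \<in> e" using o e by simp
  have "e - {u} = {v}" using e uv by blast
  then show "oth e (oth e v) = v" using o by (simp add: oth_def)
qed

lemma edges_at_oth_iff:
  "(e \<in> edges_at K v \<and> oth e v = u) \<longleftrightarrow> (e \<in> K \<and> e = {v, u} \<and> u \<noteq> v)"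
proof
  assume a: "e \<in> edges_at K v \<and> oth e v = u"
  then have c: "card e = 2" "v \<in> e" "e \<in> K" by (auto simp: edges_at_def)
  have a2: "oth e v = u" using a by simp
  have E1: "e = {v, u}" using edge_oth(1)[OF c(1,2)] unfolding a2 .
  have E2: "u \<noteq> v" using edge_oth(2)[OF c(1,2)] unfolding a2 .
  show "e \<in> K \<and> e = {v, u} \<and> u \<noteq> v" using E1 E2 c(3) by blast
next
  assume a: "e \<in> K \<and> e = {v, u} \<and> u \<noteq> v"
  then have "e - {v} = {u}" by blast
  then have "oth e v = u" by (simp add: oth_def)
  moreover have "card e = 2" "v \<in> e" using a by auto
  ultimately show "e \<in> edges_at K v \<and> oth e v = u" using a unfolding edges_at_def by blast
qed

definition Smat :: "'n::finite set set \<Rightarrow> ('n set \<Rightarrow> real) \<Rightarrow> real^'n^'n" where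
  "Smat K w = (\<chi> v u. \<Sum>e\<in>edges_at K v. w e * ((if u = v then 1 / w {v} else 0) -
      (if oth e v = u then 1 / (sqrt (w {v}) * sqrt (w {u})) else 0)))"

definition gv :: "('n set \<Rightarrow> real) \<Rightarrow> real^'n \<Rightarrow> 'n \<Rightarrow> real" where
  "gv w x v = x$v / sqrt (w {v})"

definition QF :: "'n::finite set set \<Rightarrow> ('n set \<Rightarrow> real) \<Rightarrow> real^'n \<Rightarrow> real" where
  "QF K w x = (\<Sum>v\<in>UNIV. \<Sum>e\<in>edges_at K v. w e * ((gv w x v)^2 - gv w x v * gv w x (oth e v)))"

definition evec :: "('n set \<Rightarrow> real) \<Rightarrow> 'n \<Rightarrow> real" where
  "evec w v = (if w {v} > 0 then sqrt (w {v}) else 1)"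

lemma lap_entry:
  "lap_matrix K w $ v $ u = (if w {v} = 0 then 0 else
     (\<Sum>e\<in>edges_at K v. w e / w {v} * ((if v = u then 1 else 0) - (if oth e v = u then 1 else 0))))"
  by (simp add: lap_matrix_def lap_up0_def oth_def)

locale wgraph =
  fixes K :: "'n::finite set set" and w :: "'n set \<Rightarrow> real"
  assumes nonneg: "\<forall>F\<in>K. w F \<ge> 0" and verts: "vertices K = UNIV" and normal: "normalizing K w"
begin

lemma vK: "{v} \<in> K" using verts unfolding vertices_def by auto

lemma wv_nonneg: "w {v} \<ge> 0" using nonneg vK by auto

lemma we_nonneg: "e \<in> edges_at K v \<Longrightarrow> w e \<ge> 0" using nonneg by (auto simp: edges_at_def)

lemma deg: "edges_at K v \<noteq> {} \<Longrightarrow> w {v} = (\<Sum>e\<in>edges_at K v. w e)"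
  using normal verts unfolding normalizing_def by auto

lemma pos_v: assumes "e \<in> edges_at K v" "w e \<noteq> 0" shows "w {v} > 0"
proof -
  have "w e \<le> (\<Sum>e\<in>edges_at K v. w e)"
    by (rule member_le_sum) (use assms we_nonneg in auto)
  moreover have "edges_at K v \<noteq> {}" using assms(1) by auto
  ultimately have "w e \<le> w {v}" using deg by simp
  then show ?thesis using assms(2) we_nonneg[OF assms(1)] by linarith
qed

lemma edge_at_oth: assumes "e \<in> edges_at K v" shows "e \<in> edges_at K (oth e v)"
  using assms edge_oth[of e v] by (auto simp: edges_at_def)

lemma pos_oth: assumes "e \<in> edges_at K v" "w e \<noteq> 0" shows "w {oth e v} > 0"
  using pos_v[OF edge_at_oth[OF assms(1)] assms(2)] .

lemma evec_pos: "evec w v > 0" by (simp add: evec_def)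

lemma lap_rel: "lap_matrix K w $ v $ u * evec w v = Smat K w $ v $ u * evec w u"
proof (cases "w {v} = 0")
  case True
  have sq: "sqrt (w {v}) = 0" using True by simp
  have "Smat K w $ v $ u = 0" unfolding Smat_def by (simp add: True sq cong: if_cong)
  then show ?thesis by (simp add: lap_entry True)
next
  case False
  then have wv: "w {v} > 0" using wv_nonneg[of v] by linarith
  have trm: "w e / w {v} * ((if v = u then 1 else 0) - (if oth e v = u then 1 else 0)) * evec w v =
      w e * ((if u = v then 1 / w {v} else 0) -
      (if oth e v = u then 1 / (sqrt (w {v}) * sqrt (w {u})) else 0)) * evec w u"
    if e: "e \<in> edges_at K v" for e
  proof -
    have ne: "oth e v \<noteq> v" using e edge_oth(2)[of e v] by (auto simp: edges_at_def)
    have sq: "sqrt (w {v}) * sqrt (w {v}) = w {v}" using wv by simp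
    show ?thesis
    proof (cases "u = v")
      case True
      then show ?thesis using ne wv by (simp add: evec_def field_simps)
    next
      case uv: False
      show ?thesis
      proof (cases "oth e v = u")
        case False then show ?thesis using uv by simp
      next
        case True
        show ?thesis
        proof (cases "w e = 0")
          case True then show ?thesis by simp
        next
          case False
          then have wu: "w {u} > 0" using pos_oth[OF e] \<open>oth e v = u\<close> by auto
          have "sqrt (w {u}) > 0" "sqrt (w {v}) > 0" using wu wv by auto
          then show ?thesis using uv \<open>oth e v = u\<close> wu wv sq by (simp add: evec_def field_simps)
        qed
      qed
    qed
  qed
  have "lap_matrix K w $ v $ u * evec w v =
      (\<Sum>e\<in>edges_at K v. w e / w {v} * ((if v = u then 1 else 0) - (if oth e v = u then 1 else 0)) * evec w v)"
    using False by (simp add: lap_entry sum_distrib_right)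
  also have "\<dots> = (\<Sum>e\<in>edges_at K v. w e * ((if u = v then 1 / w {v} else 0) -
      (if oth e v = u then 1 / (sqrt (w {v}) * sqrt (w {u})) else 0)) * evec w u)"
    by (rule sum.cong[OF refl]) (erule trm)
  also have "\<dots> = Smat K w $ v $ u * evec w u" by (simp add: Smat_def sum_distrib_right)
  finally show ?thesis .
qed

end

context wgraph begin

lemma Smat_off:
  assumes "v \<noteq> u"
  shows "Smat K w $ v $ u = - (\<Sum>e\<in>{e\<in>K. e = {v, u}}. w e) / (sqrt (w {v}) * sqrt (w {u}))"
proof -
  have "Smat K w $ v $ u = (\<Sum>e\<in>edges_at K v. - (if oth e v = u then w e / (sqrt (w {v}) * sqrt (w {u})) else 0))"
    unfolding Smat_def vec_lambda_beta using assms by (intro sum.cong refl) auto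
  also have "\<dots> = - (\<Sum>e\<in>{e\<in>edges_at K v. oth e v = u}. w e / (sqrt (w {v}) * sqrt (w {u})))"
    by (simp add: sum_negf sum.inter_filter)
  also have "{e\<in>edges_at K v. oth e v = u} = {e\<in>K. e = {v, u}}"
    using edges_at_oth_iff[of _ K v u] assms by blast
  finally show ?thesis by (simp add: sum_divide_distrib)
qed

lemma Smat_sym: "transpose (Smat K w) = Smat K w"
proof -
  have "Smat K w $ u $ v = Smat K w $ v $ u" for u v
  proof (cases "u = v")
    case False
    then show ?thesis by (simp add: Smat_off insert_commute mult.commute)
  qed simp
  then show ?thesis by (simp add: transpose_def vec_eq_iff)
qed

lemma Smat_mult:
  "(Smat K w *v x) $ v = (\<Sum>e\<in>edges_at K v. w e * (x$v / w {v} - x$(oth e v) / (sqrt (w {v}) * sqrt (w {oth e v}))))"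
proof -
  have "(Smat K w *v x) $ v = (\<Sum>u\<in>UNIV. \<Sum>e\<in>edges_at K v. w e * ((if u = v then 1 / w {v} else 0) -
      (if oth e v = u then 1 / (sqrt (w {v}) * sqrt (w {u})) else 0)) * x$u)"
    by (simp add: matrix_vector_mult_def Smat_def sum_distrib_right)
  also have "\<dots> = (\<Sum>e\<in>edges_at K v. \<Sum>u\<in>UNIV. w e * ((if u = v then 1 / w {v} else 0) -
      (if oth e v = u then 1 / (sqrt (w {v}) * sqrt (w {u})) else 0)) * x$u)"
    by (rule sum.swap)
  also have "\<dots> = (\<Sum>e\<in>edges_at K v. w e * (x$v / w {v} - x$(oth e v) / (sqrt (w {v}) * sqrt (w {oth e v}))))"
  proof (rule sum.cong[OF refl])
    fix e
    have "(\<Sum>u\<in>UNIV. w e * ((if u = v then 1 / w {v} else 0) -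
      (if oth e v = u then 1 / (sqrt (w {v}) * sqrt (w {u})) else 0)) * x$u) =
      (\<Sum>u\<in>UNIV. (if u = v then w e * x$u / w {v} else 0)) -
      (\<Sum>u\<in>UNIV. (if oth e v = u then w e * x$u / (sqrt (w {v}) * sqrt (w {u})) else 0))"
    proof -
      have t: "w e * ((if u = v then 1 / w {v} else 0) -
        (if oth e v = u then 1 / (sqrt (w {v}) * sqrt (w {u})) else 0)) * x$u =
        (if u = v then w e * x$u / w {v} else 0) -
        (if oth e v = u then w e * x$u / (sqrt (w {v}) * sqrt (w {u})) else 0)" for u
        by (simp add: algebra_simps)
      show ?thesis unfolding t by (rule sum_subtractf)
    qed
    also have "\<dots> = w e * (x$v / w {v} - x$(oth e v) / (sqrt (w {v}) * sqrt (w {oth e v})))"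
      by (simp add: algebra_simps)
    finally show "(\<Sum>u\<in>UNIV. w e * ((if u = v then 1 / w {v} else 0) -
      (if oth e v = u then 1 / (sqrt (w {v}) * sqrt (w {u})) else 0)) * x$u) =
      w e * (x$v / w {v} - x$(oth e v) / (sqrt (w {v}) * sqrt (w {oth e v})))" .
  qed
  finally show ?thesis .
qed

lemma QF_eq: "x \<bullet> (Smat K w *v x) = QF K w x"
proof -
  have "x \<bullet> (Smat K w *v x) = (\<Sum>v\<in>UNIV. \<Sum>e\<in>edges_at K v.
      x$v * (w e * (x$v / w {v} - x$(oth e v) / (sqrt (w {v}) * sqrt (w {oth e v})))))"
    by (simp add: inner_vec_def Smat_mult sum_distrib_left)
  also have "\<dots> = QF K w x" unfolding QF_def gv_def
  proof (intro sum.cong refl)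
    fix v e
    have "(x$v / sqrt (w {v}))^2 = x$v * x$v / w {v}"
      using wv_nonneg[of v] by (simp add: power_divide power2_eq_square)
    then show "x$v * (w e * (x$v / w {v} - x$(oth e v) / (sqrt (w {v}) * sqrt (w {oth e v})))) =
        w e * ((x$v / sqrt (w {v}))^2 - x$v / sqrt (w {v}) * (x$(oth e v) / sqrt (w {oth e v})))"
      by (simp add: algebra_simps)
  qed
  finally show ?thesis .
qed

lemma reindex: "(\<Sum>v\<in>UNIV. \<Sum>e\<in>edges_at K v. h v e) = (\<Sum>v\<in>UNIV. \<Sum>e\<in>edges_at K v. h (oth e v) e)"
proof -
  have "(\<Sum>v\<in>UNIV. \<Sum>e\<in>edges_at K v. h v e) = (\<Sum>(v,e)\<in>Sigma UNIV (edges_at K). h v e)"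
    by (rule sum.Sigma) auto
  also have "\<dots> = (\<Sum>(v,e)\<in>Sigma UNIV (edges_at K). h (oth e v) e)"
  proof (rule sum.reindex_bij_witness[where i = "\<lambda>(v,e). (oth e v, e)" and j = "\<lambda>(v,e). (oth e v, e)"])
    fix p assume p: "p \<in> Sigma UNIV (edges_at K)"
    obtain v e where pe: "p = (v, e)" by (cases p)
    have e: "e \<in> edges_at K v" using p pe by auto
    then have c: "card e = 2" "v \<in> e" by (auto simp: edges_at_def)
    show "(case (case p of (v, e) \<Rightarrow> (oth e v, e)) of (v, e) \<Rightarrow> (oth e v, e)) = p"
      using edge_oth(4)[OF c] pe by simp
    show "(case p of (v, e) \<Rightarrow> (oth e v, e)) \<in> Sigma UNIV (edges_at K)"
      using edge_at_oth[OF e] pe by auto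
    show "(case (case p of (v, e) \<Rightarrow> (oth e v, e)) of (v, e) \<Rightarrow> (oth e v, e)) = p"
      using edge_oth(4)[OF c] pe by simp
    show "(case p of (v, e) \<Rightarrow> (oth e v, e)) \<in> Sigma UNIV (edges_at K)"
      using edge_at_oth[OF e] pe by auto
    show "(case (case p of (v, e) \<Rightarrow> (oth e v, e)) of (v, e) \<Rightarrow> h (oth e v) e) = (case p of (v, e) \<Rightarrow> h v e)"
      using pe edge_oth(4)[OF c] by simp
  qed
  also have "\<dots> = (\<Sum>v\<in>UNIV. \<Sum>e\<in>edges_at K v. h (oth e v) e)"
    by (rule sum.Sigma[symmetric]) auto
  finally show ?thesis .
qed

lemma QF_twice:
  "2 * QF K w x = (\<Sum>v\<in>UNIV. \<Sum>e\<in>edges_at K v. w e * (gv w x v - gv w x (oth e v))^2)"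
proof -
  let ?g = "gv w x"
  have "QF K w x = (\<Sum>v\<in>UNIV. \<Sum>e\<in>edges_at K v. w e * ((?g (oth e v))^2 - ?g (oth e v) * ?g (oth (e) (oth e v))))"
    unfolding QF_def by (rule reindex)
  also have "\<dots> = (\<Sum>v\<in>UNIV. \<Sum>e\<in>edges_at K v. w e * ((?g (oth e v))^2 - ?g (oth e v) * ?g v))"
    by (intro sum.cong refl) (auto simp: edges_at_def edge_oth(4))
  finally have 2: "QF K w x = \<dots>" .
  have "2 * QF K w x = QF K w x + QF K w x" by simp
  also have "\<dots> = (\<Sum>v\<in>UNIV. \<Sum>e\<in>edges_at K v. w e * ((?g v)^2 - ?g v * ?g (oth e v)) +
      w e * ((?g (oth e v))^2 - ?g (oth e v) * ?g v))"
    by (subst (2) 2) (simp add: QF_def sum.distrib)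
  also have "\<dots> = (\<Sum>v\<in>UNIV. \<Sum>e\<in>edges_at K v. w e * (?g v - ?g (oth e v))^2)"
    by (intro sum.cong refl) (simp add: power2_eq_square algebra_simps)
  finally show ?thesis .
qed

lemma QF_nonneg: "QF K w x \<ge> 0"
proof -
  have "0 \<le> (\<Sum>v\<in>UNIV. \<Sum>e\<in>edges_at K v. w e * (gv w x v - gv w x (oth e v))^2)"
    by (intro sum_nonneg mult_nonneg_nonneg we_nonneg) auto
  then show ?thesis using QF_twice[of x] by simp
qed

lemma QF_le2: "QF K w x \<le> 2 * (x \<bullet> x)"
proof -
  let ?g = "gv w x"
  have "2 * QF K w x \<le> (\<Sum>v\<in>UNIV. \<Sum>e\<in>edges_at K v. w e * (2 * (?g v)^2 + 2 * (?g (oth e v))^2))"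
    unfolding QF_twice
  proof (intro sum_mono mult_left_mono)
    fix v e assume "e \<in> edges_at K v"
    show "(?g v - ?g (oth e v))^2 \<le> 2 * (?g v)^2 + 2 * (?g (oth e v))^2"
      by (smt (verit) power2_diff zero_le_power2 power2_sum)
    show "0 \<le> w e" using we_nonneg \<open>e \<in> edges_at K v\<close> by auto
  qed
  also have "\<dots> = 2 * (\<Sum>v\<in>UNIV. \<Sum>e\<in>edges_at K v. w e * (?g v)^2) + 2 * (\<Sum>v\<in>UNIV. \<Sum>e\<in>edges_at K v. w e * (?g (oth e v))^2)"
    by (simp add: algebra_simps sum.distrib sum_distrib_left)
  also have "(\<Sum>v\<in>UNIV. \<Sum>e\<in>edges_at K v. w e * (?g (oth e v))^2) = (\<Sum>v\<in>UNIV. \<Sum>e\<in>edges_at K v. w e * (?g v)^2)"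
    by (rule reindex[symmetric])
  also have "(\<Sum>v\<in>UNIV. \<Sum>e\<in>edges_at K v. w e * (?g v)^2) \<le> (\<Sum>v\<in>UNIV. (x$v)^2)"
  proof (rule sum_mono)
    fix v
    show "(\<Sum>e\<in>edges_at K v. w e * (?g v)^2) \<le> (x$v)^2"
    proof (cases "edges_at K v = {}")
      case True then show ?thesis by simp
    next
      case False
      have "(\<Sum>e\<in>edges_at K v. w e * (?g v)^2) = w {v} * (?g v)^2"
        using deg[OF False] by (simp add: sum_distrib_right)
      also have "\<dots> \<le> (x$v)^2"
      proof (cases "w {v} = 0")
        case True then show ?thesis by simp
      next
        case False
        then have "w {v} > 0" using wv_nonneg[of v] by linarith
        then show ?thesis by (simp add: gv_def power_divide)
      qed
      finally show ?thesis .
    qed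
  qed
  finally have "2 * QF K w x \<le> 4 * (\<Sum>v\<in>UNIV. (x$v)^2)" by linarith
  moreover have "x \<bullet> x = (\<Sum>v\<in>UNIV. (x$v)^2)" by (simp add: inner_vec_def power2_eq_square)
  ultimately show ?thesis by linarith
qed

end

lemma dim_constraints:
  fixes F :: "(real^'n) set"
  assumes "finite F"
  shows "subspace {x. \<forall>f\<in>F. f \<bullet> x = 0}" "CARD('n) - card F \<le> dim {x. \<forall>f\<in>F. f \<bullet> x = 0}"
proof -
  have eq: "{y \<in> UNIV. \<forall>x\<in>span F. orthogonal x y} = {x. \<forall>f\<in>F. f \<bullet> x = 0}"
  proof (intro equalityI subsetI)
    fix y assume "y \<in> {y \<in> UNIV. \<forall>x\<in>span F. orthogonal x y}"
    then show "y \<in> {x. \<forall>f\<in>F. f \<bullet> x = 0}" by (auto simp: orthogonal_def span_base)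
  next
    fix y assume y: "y \<in> {x. \<forall>f\<in>F. f \<bullet> x = 0}"
    have "orthogonal y x" if "x \<in> span F" for x
      using orthogonal_to_span[OF that, of y] y by (auto simp: orthogonal_def inner_commute)
    then show "y \<in> {y \<in> UNIV. \<forall>x\<in>span F. orthogonal x y}" by (auto simp: orthogonal_commute)
  qed
  show "subspace {x. \<forall>f\<in>F. f \<bullet> x = 0}"
    unfolding subspace_def by (auto simp: inner_add_right)
  have "dim {y \<in> UNIV. \<forall>x\<in>span F. orthogonal x y} + dim (span F) = dim (UNIV :: (real^'n) set)"
    by (rule dim_subspace_orthogonal_to_vectors) auto
  moreover have "dim (span F) \<le> card F" using dim_le_card'[OF assms] by simp
  moreover have "dim (UNIV :: (real^'n) set) = CARD('n)" by simp
  ultimately have "dim {x. \<forall>f\<in>F. f \<bullet> x = 0} + dim (span F) = CARD('n)" "dim (span F) \<le> card F"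
    unfolding eq by auto
  then show "CARD('n) - card F \<le> dim {x. \<forall>f\<in>F. f \<bullet> x = 0}" by linarith
qed

lemma dim_Int_ge:
  fixes U W :: "(real^'n) set"
  assumes "subspace U" "subspace W"
  shows "dim U + dim W \<le> dim (U \<inter> W) + CARD('n)"
  using dim_sums_Int[OF assms] dim_subset_UNIV_cart[of "{x + y |x y. x \<in> U \<and> y \<in> W}"] by linarith

lemma inner_axis1: "axis i (1::real) \<bullet> x = x $ i"
  by (simp add: inner_axis')

locale setting =
  fixes K H :: "'n::finite set set" and wK wH :: "'n set \<Rightarrow> real" and lams thetas :: "real list"
  assumes K_verts: "vertices K = UNIV"
    and wK_nonneg: "\<forall>F\<in>K. wK F \<ge> 0"
    and wH_nonneg: "\<forall>F\<in>H. wH F \<ge> 0"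
    and sub: "weighted_subgraph H wH K wK"
    and normK: "normalizing K wK"
    and normL: "normalizing K (diff_weight wK H wH)"
    and eigK: "sorted_eigenvalues (lap_matrix K wK) lams"
    and eigL: "sorted_eigenvalues (lap_matrix K (diff_weight wK H wH)) thetas"
begin

abbreviation "wL \<equiv> diff_weight wK H wH"
abbreviation "VH \<equiv> vertices H"

lemma H_complex: "is_complex1 H" using sub unfolding weighted_subgraph_def by auto
lemma HK: "H \<subseteq> K" using sub unfolding weighted_subgraph_def by auto
lemma wH_le: "F \<in> H \<Longrightarrow> wH F \<le> wK F" using sub unfolding weighted_subgraph_def by auto

lemma wL_nonneg: "\<forall>F\<in>K. wL F \<ge> 0"
  using wH_le wK_nonneg by (auto simp: diff_weight_def)

sublocale GK: wgraph K wK by unfold_locales (use wK_nonneg K_verts normK in auto)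
sublocale GL: wgraph K wL by unfold_locales (use wL_nonneg K_verts normL in auto)

lemma wL_v_le: "wL {v} \<le> wK {v}"
  using wH_nonneg by (auto simp: diff_weight_def)

lemma wL_notVH: "v \<notin> VH \<Longrightarrow> wL {v} = wK {v}"
  by (simp add: diff_weight_def vertices_def)

lemma wL_notH: "e \<notin> H \<Longrightarrow> wL e = wK e"
  by (simp add: diff_weight_def)

lemma H_edge_verts:
  assumes "e \<in> H" "card e = 2" "v \<in> e"
  shows "v \<in> VH" "oth e v \<in> VH"
proof -
  have "{v} \<subseteq> e" "{oth e v} \<subseteq> e" using assms edge_oth(3)[OF assms(2,3)] by auto
  then show "v \<in> VH" "oth e v \<in> VH"
    using H_complex assms(1) unfolding is_complex1_def vertices_def by blast+
qed

lemma eK: "\<forall>i. 0 < evec wK i" using GK.evec_pos by blast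
lemma eL: "\<forall>i. 0 < evec wL i" using GL.evec_pos by blast

lemma relK: "\<forall>i j. lap_matrix K wK $ i $ j * evec wK i = Smat K wK $ i $ j * evec wK j"
  using GK.lap_rel by blast
lemma relL: "\<forall>i j. lap_matrix K wL $ i $ j * evec wL i = Smat K wL $ i $ j * evec wL j"
  using GL.lap_rel by blast

lemmas GenK = gen_eig[OF GK.Smat_sym eK relK eigK]
lemmas GenL = gen_eig[OF GL.Smat_sym eL relL eigL]

lemma lenK: "length lams = CARD('n)" using eigK by (simp add: sorted_eigenvalues_def)
lemma lenL: "length thetas = CARD('n)" using eigL by (simp add: sorted_eigenvalues_def)

lemma theta_bounds: assumes "t \<in> set thetas" shows "0 \<le> t" "t \<le> 2"
proof -
  obtain x where x: "x \<bullet> x = 1" "t = x \<bullet> (Smat K wL *v x)" using GenL(1) assms by blast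
  then show "0 \<le> t" using GL.QF_nonneg GL.QF_eq by simp
  show "t \<le> 2" using x GL.QF_le2[of x] GL.QF_eq by simp
qed

lemma QF_upper_eq:
  assumes "\<forall>v\<in>VH. x $ v = 0"
  shows "QF K wL x = QF K wK x"
  unfolding QF_def
proof (intro sum.cong refl)
  fix v e assume e: "e \<in> edges_at K v"
  then have c: "card e = 2" "v \<in> e" by (auto simp: edges_at_def)
  have gq: "gv wL x u = gv wK x u" if "u \<notin> VH" for u using wL_notVH[OF that] by (simp add: gv_def)
  have g0: "gv w x u = 0" if "u \<in> VH" for w u using assms that by (simp add: gv_def)
  show "wL e * ((gv wL x v)^2 - gv wL x v * gv wL x (oth e v)) =
      wK e * ((gv wK x v)^2 - gv wK x v * gv wK x (oth e v))"
  proof (cases "e \<in> H")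
    case True
    then show ?thesis using H_edge_verts[OF True c] g0 by simp
  next
    case False
    have "gv wL x u = gv wK x u" for u by (cases "u \<in> VH") (auto simp: g0 gq)
    then show ?thesis using wL_notH[OF False] by simp
  qed
qed

lemma upper:
  assumes k: "1 \<le> k" "k \<le> CARD('n)"
  shows "thetas ! (k - 1) \<le> eig_ext lams (int k + int (card VH))"
proof (cases "k + card VH \<le> CARD('n)")
  case False
  have "thetas ! (k - 1) \<in> set thetas" using k lenL by simp
  then have "thetas ! (k - 1) \<le> 2" by (rule theta_bounds)
  moreover have "eig_ext lams (int k + int (card VH)) = 2"
    using False lenK k by (simp add: eig_ext_def nat_add_distrib)
  ultimately show ?thesis by simp
next
  case True
  define m where "m = k + card VH"
  have m1: "1 \<le> m" "m \<le> CARD('n)" using k True m_def by auto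
  obtain WK where WK: "subspace WK" "m \<le> dim WK"
      "\<forall>x\<in>WK. x \<bullet> (Smat K wK *v x) \<le> lams!(m-1) * (x \<bullet> x)"
    using GenK(3)[OF m1] by blast
  define F where "F = (\<lambda>v. axis v (1::real)) ` VH"
  define Z where "Z = {x::real^'n. \<forall>f\<in>F. f \<bullet> x = 0}"
  have fF: "finite F" unfolding F_def by simp
  have Z: "subspace Z" "CARD('n) - card F \<le> dim Z" using dim_constraints[OF fF] unfolding Z_def by auto
  have "card F \<le> card VH" unfolding F_def by (rule card_image_le) simp
  then have dZ: "CARD('n) - card VH \<le> dim Z" using Z(2) by linarith
  have dI: "dim WK + dim Z \<le> dim (WK \<inter> Z) + CARD('n)" by (rule dim_Int_ge[OF WK(1) Z(1)])
  have kI: "k \<le> dim (WK \<inter> Z)" using dI dZ WK(2) m_def True by linarith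
  have sI: "subspace (WK \<inter> Z)" using WK(1) Z(1) by (rule subspace_inter)
  have bnd: "\<forall>x\<in>WK \<inter> Z. x \<bullet> (Smat K wL *v x) \<le> lams!(m-1) * (x \<bullet> x)"
  proof
    fix x assume x: "x \<in> WK \<inter> Z"
    then have "\<forall>v\<in>VH. x $ v = 0" unfolding Z_def F_def by (auto simp: inner_axis1)
    then have "x \<bullet> (Smat K wL *v x) = x \<bullet> (Smat K wK *v x)"
      using QF_upper_eq GL.QF_eq GK.QF_eq by simp
    then show "x \<bullet> (Smat K wL *v x) \<le> lams!(m-1) * (x \<bullet> x)" using WK(3) x by auto
  qed
  have "thetas ! (k - 1) \<le> lams!(m-1)" by (rule GenL(2)[OF sI k(1) kI bnd])
  moreover have "eig_ext lams (int k + int (card VH)) = lams!(m-1)"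
    using True lenK k m_def by (simp add: eig_ext_def nat_add_distrib)
  ultimately show ?thesis by simp
qed

end

context setting begin

lemma lower:
  assumes k: "1 \<le> k" "k \<le> CARD('n)"
  shows "eig_ext lams (int k - int (card VH) + int (num_components H)) \<le> thetas ! (k - 1)"
proof -
  define \<theta> where "\<theta> = thetas ! (k - 1)"
  have \<theta>0: "0 \<le> \<theta>" using k lenL theta_bounds(1) unfolding \<theta>_def by simp
  define Ad where "Ad = {(x, y). {x, y} \<in> H \<and> x \<noteq> y}"
  define R where "R = {(u, v). u \<in> VH \<and> v \<in> VH \<and> (u, v) \<in> Ad\<^sup>*}"
  have nc: "num_components H = card (VH // R)" unfolding num_components_def R_def Ad_def ..
  have symA: "sym Ad" by (auto simp: sym_def Ad_def insert_commute)
  have symR: "(u, v) \<in> Ad\<^sup>* \<Longrightarrow> (v, u) \<in> Ad\<^sup>*" for u v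
    using sym_rtrancl[OF symA] unfolding sym_def by blast
  have eqv: "equiv VH R"
    unfolding equiv_def refl_on_def sym_def trans_def R_def
    using symR by (auto intro: rtrancl_trans)
  define rep where "rep v = (SOME r. r \<in> R``{v})" for v
  have rep1: "(v, rep v) \<in> R" if "v \<in> VH" for v
  proof -
    have "v \<in> R``{v}" using that unfolding R_def by auto
    then have "rep v \<in> R``{v}" unfolding rep_def by (rule someI)
    then show ?thesis by simp
  qed
  have rep2: "rep u = rep v" if "(u, v) \<in> R" for u v
    using equiv_class_eq[OF eqv that] unfolding rep_def by simp
  have repVH: "rep v \<in> VH" if "v \<in> VH" for v using rep1[OF that] unfolding R_def by auto
  have reprep: "rep (rep v) = rep v" if "v \<in> VH" for v using rep2[OF rep1[OF that]] by simp
  define Reps where "Reps = rep ` VH"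
  have RepsVH: "Reps \<subseteq> VH" using repVH unfolding Reps_def by auto
  have repfix: "rep v = v" if "v \<in> Reps" for v using that reprep unfolding Reps_def by auto
  have cardReps: "card Reps = num_components H"
  proof -
    define s where "s C = (SOME r. r \<in> C)" for C :: "'n set"
    have q: "VH // R = (\<lambda>v. R``{v}) ` VH" by (auto simp: quotient_def)
    have "Reps = s ` (VH // R)" unfolding Reps_def q s_def rep_def by (simp add: image_comp o_def)
    moreover have "inj_on s (VH // R)"
    proof (rule inj_onI)
      fix C D assume C: "C \<in> VH // R" and D: "D \<in> VH // R" and sCD: "s C = s D"
      have "s C \<in> C" using in_quotient_imp_non_empty[OF eqv C] unfolding s_def by (auto intro: someI_ex)
      moreover have "s D \<in> D" using in_quotient_imp_non_empty[OF eqv D] unfolding s_def by (auto intro: someI_ex)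
      ultimately show "C = D" using quotient_disj[OF eqv C D] sCD by auto
    qed
    ultimately show ?thesis using nc by (simp add: card_image)
  qed
  have hn: "card VH \<le> CARD('n)" by (rule card_mono) auto
  have ch: "num_components H \<le> card VH" using cardReps RepsVH by (metis card_mono finite)
  show ?thesis
  proof (cases "int k - int (card VH) + int (num_components H) \<le> 0")
    case True
    then show ?thesis using \<theta>0 unfolding \<theta>_def by (simp add: eig_ext_def)
  next
    case False
    define m where "m = nat (int k - int (card VH) + int (num_components H))"
    have mi: "int m = int k - int (card VH) + int (num_components H)" using False m_def by simp
    have m1: "1 \<le> m" using mi False by linarith
    have mk: "m \<le> k" using mi ch by linarith
    have ext: "eig_ext lams (int k - int (card VH) + int (num_components H)) = lams ! (m - 1)"
      using False m_def mk k lenK by (simp add: eig_ext_def)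
    define a where "a v = (if wL {v} > 0 then sqrt (wL {v}) else evec wK v)" for v
    have apos: "a v > 0" for v using GK.evec_pos unfolding a_def by auto
    have ale: "a v \<le> evec wK v" for v
    proof (cases "wL {v} > 0")
      case True
      then have "wK {v} > 0" using wL_v_le[of v] by linarith
      then show ?thesis using True wL_v_le[of v] unfolding a_def evec_def by auto
    qed (simp add: a_def)
    define F where "F = (\<lambda>v. a (rep v) *\<^sub>R axis v (1::real) - a v *\<^sub>R axis (rep v) 1) ` (VH - Reps)"
    define Y where "Y = {x::real^'n. \<forall>f\<in>F. f \<bullet> x = 0}"
    have fF: "finite F" unfolding F_def by simp
    have Y: "subspace Y" "CARD('n) - card F \<le> dim Y" using dim_constraints[OF fF] unfolding Y_def by auto
    have "card F \<le> card (VH - Reps)" unfolding F_def by (rule card_image_le) simp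
    also have "\<dots> = card VH - card Reps" using RepsVH by (simp add: card_Diff_subset finite_subset)
    finally have cF: "card F + num_components H \<le> card VH" using cardReps ch by linarith
    have Ycons: "a (rep v) * x$v = a v * x$(rep v)" if x: "x \<in> Y" and v: "v \<in> VH" for x v
    proof (cases "v \<in> Reps")
      case True then show ?thesis using repfix by simp
    next
      case False
      then have "(a (rep v) *\<^sub>R axis v (1::real) - a v *\<^sub>R axis (rep v) 1) \<in> F" using v unfolding F_def by auto
      then have "(a (rep v) *\<^sub>R axis v (1::real) - a v *\<^sub>R axis (rep v) 1) \<bullet> x = 0" using x unfolding Y_def by auto
      then show ?thesis by (simp add: inner_diff_left inner_axis1)
    qed
    define \<gamma> where "\<gamma> x v = x$(rep v) / a (rep v)" for x :: "real^'n" and v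
    have Yval: "x$v = a v * \<gamma> x v" if x: "x \<in> Y" and v: "v \<in> VH" for x v
    proof -
      have "a (rep v) * x$v = a v * x$(rep v)" by (rule Ycons[OF x v])
      then show ?thesis unfolding \<gamma>_def using apos[of "rep v"] by (simp add: field_simps)
    qed
    define \<Phi> where "\<Phi> x = (\<chi> v. if v \<in> VH then evec wK v * \<gamma> x v else x$v)" for x
    have lin: "linear \<Phi>"
      by (rule linearI) (auto simp: \<Phi>_def \<gamma>_def vec_eq_iff add_divide_distrib algebra_simps)
    have \<Phi>0: "x = 0" if x: "x \<in> Y" and "\<Phi> x = 0" for x
    proof -
      have "x$v = 0" for v
      proof (cases "v \<in> VH")
        case True
        have "\<Phi> x $ v = evec wK v * \<gamma> x v" using True by (simp add: \<Phi>_def)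
        then have "evec wK v * \<gamma> x v = 0" using \<open>\<Phi> x = 0\<close> by simp
        then have "\<gamma> x v = 0" using GK.evec_pos[of v] by simp
        then show ?thesis using Yval[OF x True] by simp
      next
        case False
        have "\<Phi> x $ v = x $ v" using False by (simp add: \<Phi>_def)
        then show ?thesis using \<open>\<Phi> x = 0\<close> by simp
      qed
      then show ?thesis by (simp add: vec_eq_iff)
    qed
    have gK_VH: "gv wK (\<Phi> x) v = \<gamma> x v" if "v \<in> VH" "wK {v} > 0" for x v
      using that by (simp add: gv_def \<Phi>_def evec_def)
    have gL_VH: "gv wL x v = \<gamma> x v" if x: "x \<in> Y" and "v \<in> VH" "wL {v} > 0" for x v
      using that Yval[OF x \<open>v \<in> VH\<close>] by (simp add: gv_def a_def)
    have g_eq: "gv wK (\<Phi> x) u = gv wL x u" if x: "x \<in> Y" and "wK {u} > 0" "wL {u} > 0" for x u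
    proof (cases "u \<in> VH")
      case True then show ?thesis using gK_VH gL_VH that by simp
    next
      case False then show ?thesis using wL_notVH[OF False] by (simp add: gv_def \<Phi>_def)
    qed
    have QFeq: "QF K wK (\<Phi> x) = QF K wL x" if x: "x \<in> Y" for x
      unfolding QF_def
    proof (intro sum.cong refl)
      fix v e assume e: "e \<in> edges_at K v"
      then have c: "card e = 2" "v \<in> e" by (auto simp: edges_at_def)
      define ov where "ov = oth e v"
      show "wK e * ((gv wK (\<Phi> x) v)^2 - gv wK (\<Phi> x) v * gv wK (\<Phi> x) (oth e v)) =
          wL e * ((gv wL x v)^2 - gv wL x v * gv wL x (oth e v))"
      proof (cases "e \<in> H")
        case True
        have vo: "v \<in> VH" "ov \<in> VH" using H_edge_verts[OF True c] ov_def by auto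
        have "e = {v, ov}" "ov \<noteq> v" using edge_oth(1,2)[OF c] ov_def by auto
        then have "(v, ov) \<in> Ad" using True unfolding Ad_def by auto
        then have "(v, ov) \<in> R" using vo unfolding R_def by auto
        then have ga: "\<gamma> x ov = \<gamma> x v" unfolding \<gamma>_def using rep2 by simp
        have tK: "wK e * ((gv wK (\<Phi> x) v)^2 - gv wK (\<Phi> x) v * gv wK (\<Phi> x) ov) = 0"
        proof (cases "wK e = 0")
          case False
          have "wK {v} > 0" "wK {ov} > 0" using GK.pos_v[OF e False] GK.pos_oth[OF e False] ov_def by auto
          then show ?thesis using gK_VH vo ga by (simp add: power2_eq_square)
        qed simp
        have tL: "wL e * ((gv wL x v)^2 - gv wL x v * gv wL x ov) = 0"
        proof (cases "wL e = 0")
          case False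
          have "wL {v} > 0" "wL {ov} > 0" using GL.pos_v[OF e False] GL.pos_oth[OF e False] ov_def by auto
          then show ?thesis using gL_VH[OF x] vo ga by (simp add: power2_eq_square)
        qed simp
        show ?thesis by (simp only: ov_def[symmetric] tK tL)
      next
        case False
        have we: "wL e = wK e" by (rule wL_notH[OF False])
        show ?thesis
        proof (cases "wK e = 0")
          case True then show ?thesis using we by simp
        next
          case nz: False
          then have nzL: "wL e \<noteq> 0" using we by simp
          have "wK {v} > 0" "wK {ov} > 0" using GK.pos_v[OF e nz] GK.pos_oth[OF e nz] ov_def by auto
          moreover have "wL {v} > 0" "wL {ov} > 0" using GL.pos_v[OF e nzL] GL.pos_oth[OF e nzL] ov_def by auto
          ultimately have "gv wK (\<Phi> x) v = gv wL x v" "gv wK (\<Phi> x) ov = gv wL x ov"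
            using g_eq[OF x] by auto
          then show ?thesis using we ov_def by simp
        qed
      qed
    qed
    have nrm: "x \<bullet> x \<le> \<Phi> x \<bullet> \<Phi> x" if x: "x \<in> Y" for x
      unfolding inner_vec_def
    proof (rule sum_mono)
      fix v
      show "x$v \<bullet> x$v \<le> \<Phi> x $ v \<bullet> \<Phi> x $ v"
      proof (cases "v \<in> VH")
        case True
        have "a v * a v \<le> evec wK v * evec wK v"
          using ale[of v] apos[of v] by (intro mult_mono) auto
        then have "(a v * a v) * (\<gamma> x v * \<gamma> x v) \<le> (evec wK v * evec wK v) * (\<gamma> x v * \<gamma> x v)"
          by (intro mult_right_mono) auto
        then show ?thesis using Yval[OF x True] True by (simp add: \<Phi>_def mult_ac)
      next
        case False then show ?thesis by (simp add: \<Phi>_def)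
      qed
    qed
    obtain UL where UL: "subspace UL" "k \<le> dim UL"
        "\<forall>x\<in>UL. x \<bullet> (Smat K wL *v x) \<le> \<theta> * (x \<bullet> x)"
      using GenL(3)[OF k] unfolding \<theta>_def by blast
    define S0 where "S0 = UL \<inter> Y"
    have sS0: "subspace S0" unfolding S0_def using UL(1) Y(1) by (rule subspace_inter)
    have dS0: "dim UL + dim Y \<le> dim S0 + CARD('n)" unfolding S0_def by (rule dim_Int_ge[OF UL(1) Y(1)])
    have dY: "CARD('n) \<le> dim Y + card F" using Y(2) by linarith
    have mS0: "m \<le> dim S0" using dS0 dY cF UL(2) mi by linarith
    have inj: "inj_on \<Phi> (span S0)"
    proof -
      have sp: "span S0 = S0" using sS0 by (simp add: span_eq_iff)
      have "inj_on \<Phi> S0"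
      proof (rule inj_onI)
        fix x y assume "x \<in> S0" "y \<in> S0" "\<Phi> x = \<Phi> y"
        then have "x - y \<in> Y" "\<Phi> (x - y) = 0"
          using Y(1) linear_diff[OF lin] unfolding S0_def by (auto intro: subspace_diff)
        then have "x - y = 0" using \<Phi>0 by blast
        then show "x = y" by simp
      qed
      then show ?thesis unfolding sp .
    qed
    have dW: "dim (\<Phi> ` S0) = dim S0" by (rule dim_image_eq[OF lin inj])
    have sW: "subspace (\<Phi> ` S0)" by (rule linear_subspace_image[OF lin sS0])
    have bnd: "\<forall>y\<in>\<Phi> ` S0. y \<bullet> (Smat K wK *v y) \<le> \<theta> * (y \<bullet> y)"
    proof
      fix y assume "y \<in> \<Phi> ` S0"
      then obtain x where x: "x \<in> S0" "y = \<Phi> x" by blast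
      have xY: "x \<in> Y" "x \<in> UL" using x unfolding S0_def by auto
      have "y \<bullet> (Smat K wK *v y) = QF K wL x" using QFeq[OF xY(1)] x GK.QF_eq by simp
      also have "\<dots> = x \<bullet> (Smat K wL *v x)" using GL.QF_eq by simp
      also have "\<dots> \<le> \<theta> * (x \<bullet> x)" using UL(3) xY by blast
      also have "\<dots> \<le> \<theta> * (y \<bullet> y)" using nrm[OF xY(1)] x \<theta>0 by (simp add: mult_left_mono)
      finally show "y \<bullet> (Smat K wK *v y) \<le> \<theta> * (y \<bullet> y)" .
    qed
    have "lams ! (m - 1) \<le> \<theta>" using GenK(2)[OF sW m1 _ bnd] dW mS0 by simp
    then show ?thesis using ext unfolding \<theta>_def by simp
  qed
qed

end

theorem corollary2p12:
  fixes K H :: "'n::finite set set" and wK wH :: "'n set \<Rightarrow> real"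
    and lams thetas :: "real list"
  assumes K_complex: "is_complex1 K" and K_verts: "vertices K = UNIV"
    and wK_nonneg: "\<forall>F\<in>K. wK F \<ge> 0"
    and wH_nonneg: "\<forall>F\<in>H. wH F \<ge> 0"
    and sub: "weighted_subgraph H wH K wK"
    and diff: "is_complex1 {F \<in> K. diff_weight wK H wH F > 0}"
    and normK: "normalizing K wK"
    and normL: "normalizing K (diff_weight wK H wH)"
    and eigK: "sorted_eigenvalues (lap_matrix K wK) lams"
    and eigL: "sorted_eigenvalues (lap_matrix K (diff_weight wK H wH)) thetas"
    and k: "1 \<le> k" "k \<le> CARD('n)"
  shows "eig_ext lams (int k - int (card (vertices H)) + int (num_components H)) \<le> thetas ! (k - 1)
       \<and> thetas ! (k - 1) \<le> eig_ext lams (int k + int (card (vertices H)))"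
proof -
  interpret setting K H wK wH lams thetas
    by (rule setting.intro[OF K_verts wK_nonneg wH_nonneg sub normK normL eigK eigL])
  show ?thesis using lower[OF k] upper[OF k] by simp
qed

end
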